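(* Let $L$ be a finite lattice which is a subdirect product $L\subseteq\prod_{i=1}^t L_i$ of finite subdirectly irreducible lattices. Regard $G(L)$ as a partial join-semilattice, and for $x\in L$ put $\varepsilon(x):=\{a\in G(L):\ a\le x\}$. Then $\varepsilon$ is an isomorphism from $L$ onto the set of all $\bigvee$-ideals of $(G(L),\bigvee)$ ordered by inclusion; in particular $L\setminus\{0\}$ is isomorphic to the join-semilattice of nonempty $\bigvee$-ideals, i.e. $F_\vee(G(L),\bigvee)\cong L\setminus\{0\}$.
   Context: $\pi_i:L\to L_i$ is the surjective restricted projection, $\sigma_i(y):=\bigwedge\{x\in L:\pi_i(x)=y\}$ its smallest pre-image map, and $G(L):=\bigcup_{i=1}^t\sigma_i(L_i\setminus\{0\})$ (the scaffolding). The partial join on $G(L)$: for $B\subseteq G(L)$, $\bigvee B$ (computed in $L$) is defined in $(G(L),\bigvee)$ iff it lies in $G(L)$. A subset $A\subseteq G(L)$ is a $\bigvee$-ideal if it is hereditary ($a\in A$, $b\in G(L)$, $b\le a$ imply $b\in A$) and closed under the defined partial joins ($B\subseteq A$ and $\bigvee B\in G(L)$ imply $\bigvee B\in A$). $F_\vee(G(L),\bigvee)$ denotes the join-semilattice of nonempty $\bigvee$-ideals under inclusion. *)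

theory Defs
  imports "HOL-Algebra.Lattice"
begin

text \<open>Lattices are HOL-Algebra lattices (records of type gorder, with eq being
  equality).  Congruences of a lattice K: equivalence relations on the carrier
  compatible with binary joins and meets.\<close>

definition lat_congruence :: "('a, 'b) gorder_scheme \<Rightarrow> ('a \<times> 'a) set \<Rightarrow> bool" where
  "lat_congruence K \<theta> \<longleftrightarrow> equiv (carrier K) \<theta> \<and>
     (\<forall>a b c d. (a, b) \<in> \<theta> \<longrightarrow> (c, d) \<in> \<theta> \<longrightarrow>
        (a \<squnion>\<^bsub>K\<^esub> c, b \<squnion>\<^bsub>K\<^esub> d) \<in> \<theta> \<and> (a \<sqinter>\<^bsub>K\<^esub> c, b \<sqinter>\<^bsub>K\<^esub> d) \<in> \<theta>)"

definition subdirectly_irreducible :: "('a, 'b) gorder_scheme \<Rightarrow> bool" where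
  "subdirectly_irreducible K \<longleftrightarrow> lattice K \<and>
     (\<exists>x\<in>carrier K. \<exists>y\<in>carrier K. x \<noteq> y) \<and>
     (\<exists>\<mu>. lat_congruence K \<mu> \<and> \<mu> \<noteq> Id_on (carrier K) \<and>
        (\<forall>\<theta>. lat_congruence K \<theta> \<and> \<theta> \<noteq> Id_on (carrier K) \<longrightarrow> \<mu> \<subseteq> \<theta>))"

definition prod_ord :: "nat \<Rightarrow> (nat \<Rightarrow> 'a gorder) \<Rightarrow> (nat \<Rightarrow> 'a) set \<Rightarrow> (nat \<Rightarrow> 'a) gorder" where
  "prod_ord t Ls L = \<lparr> carrier = L, eq = (=),
      le = (\<lambda>x y. \<forall>i\<in>{1..t}. x i \<sqsubseteq>\<^bsub>Ls i\<^esub> y i) \<rparr>"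

definition subdirect_product :: "nat \<Rightarrow> (nat \<Rightarrow> 'a gorder) \<Rightarrow> (nat \<Rightarrow> 'a) set \<Rightarrow> bool" where
  "subdirect_product t Ls L \<longleftrightarrow>
     (\<forall>i\<in>{1..t}. lattice (Ls i)) \<and>
     L \<subseteq> (\<Pi>\<^sub>E i\<in>{1..t}. carrier (Ls i)) \<and> L \<noteq> {} \<and>
     (\<forall>x\<in>L. \<forall>y\<in>L.
        (\<lambda>i. if i \<in> {1..t} then x i \<squnion>\<^bsub>Ls i\<^esub> y i else undefined) \<in> L \<and>
        (\<lambda>i. if i \<in> {1..t} then x i \<sqinter>\<^bsub>Ls i\<^esub> y i else undefined) \<in> L) \<and>
     (\<forall>i\<in>{1..t}. (\<lambda>x. x i) ` L = carrier (Ls i))"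

definition sigma :: "nat \<Rightarrow> (nat \<Rightarrow> 'a gorder) \<Rightarrow> (nat \<Rightarrow> 'a) set \<Rightarrow> nat \<Rightarrow> 'a \<Rightarrow> (nat \<Rightarrow> 'a)" where
  "sigma t Ls L i y = \<Sqinter>\<^bsub>prod_ord t Ls L\<^esub> {x \<in> L. x i = y}"

definition scaffolding :: "nat \<Rightarrow> (nat \<Rightarrow> 'a gorder) \<Rightarrow> (nat \<Rightarrow> 'a) set \<Rightarrow> (nat \<Rightarrow> 'a) set" where
  "scaffolding t Ls L =
     (\<Union>i\<in>{1..t}. sigma t Ls L i ` (carrier (Ls i) - {\<bottom>\<^bsub>Ls i\<^esub>}))"

definition vee_ideal :: "nat \<Rightarrow> (nat \<Rightarrow> 'a gorder) \<Rightarrow> (nat \<Rightarrow> 'a) set \<Rightarrow> (nat \<Rightarrow> 'a) set \<Rightarrow> bool" where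
  "vee_ideal t Ls L A \<longleftrightarrow>
     A \<subseteq> scaffolding t Ls L \<and>
     (\<forall>a\<in>A. \<forall>b\<in>scaffolding t Ls L. b \<sqsubseteq>\<^bsub>prod_ord t Ls L\<^esub> a \<longrightarrow> b \<in> A) \<and>
     (\<forall>B. B \<subseteq> A \<longrightarrow> \<Squnion>\<^bsub>prod_ord t Ls L\<^esub> B \<in> scaffolding t Ls L \<longrightarrow>
          \<Squnion>\<^bsub>prod_ord t Ls L\<^esub> B \<in> A)"

definition epsilon :: "nat \<Rightarrow> (nat \<Rightarrow> 'a gorder) \<Rightarrow> (nat \<Rightarrow> 'a) set \<Rightarrow> (nat \<Rightarrow> 'a) \<Rightarrow> (nat \<Rightarrow> 'a) set" where
  "epsilon t Ls L x = {a \<in> scaffolding t Ls L. a \<sqsubseteq>\<^bsub>prod_ord t Ls L\<^esub> x}"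

end

theory Submission
  imports Defs
begin



lemma (in lattice) fin_bottom:
  assumes "finite (carrier L)" "carrier L \<noteq> {}"
  shows "least L (\<bottom>) (carrier L)"
proof -
  have "greatest L (\<Sqinter> (carrier L)) (Lower L (carrier L))"
    using assms by (intro finite_inf_greatest) auto
  hence "least L (\<Sqinter> (carrier L)) (carrier L)"
    unfolding greatest_def least_def Lower_def by auto
  thus ?thesis unfolding bottom_def by (rule someI)
qed

lemma (in lattice) fin_sup:
  assumes "finite (carrier L)" "carrier L \<noteq> {}" "F \<subseteq> carrier L"
  shows "least L (\<Squnion> F) (Upper L F)"
proof (cases "F = {}")
  case True
  have "least L (\<bottom>) (Upper L F)" using fin_bottom[OF assms(1-2)] True by simp
  thus ?thesis unfolding sup_def by (rule someI)
next
  case False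
  show ?thesis using assms False finite_subset by (intro finite_sup_least) auto
qed

lemma (in lattice) join_closed_sup:
  assumes "finite F" "F \<noteq> {}" "F \<subseteq> C" "C \<subseteq> carrier L"
    "\<And>x y. x \<in> C \<Longrightarrow> y \<in> C \<Longrightarrow> x \<squnion> y \<in> C"
  shows "\<Squnion> F \<in> C"
proof -
  have "\<exists>m\<in>C. least L m (Upper L F)"
    using assms(1,2,3)
  proof (induction F rule: finite_ne_induct)
    case (singleton x)
    thus ?case using assms(4) by (intro bexI[of _ x] sup_of_singletonI) auto
  next
    case (insert a F)
    then obtain m where m: "m \<in> C" "least L m (Upper L F)" by auto
    have aC: "a \<in> C" using insert by auto
    have mc: "m \<in> carrier L" "a \<in> carrier L" using m aC assms(4) by auto
    have FC: "F \<subseteq> carrier L" using insert assms(4) by auto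
    show ?case
    proof (intro bexI[of _ "a \<squnion> m"] least_UpperI[where L=L])
      fix x assume "x \<in> insert a F"
      then show "x \<sqsubseteq> a \<squnion> m"
      proof
        assume "x = a" thus ?thesis using mc join_left by auto
      next
        assume x: "x \<in> F"
        have "x \<sqsubseteq> m" by (rule least_Upper_above[OF m(2) x FC])
        moreover have "m \<sqsubseteq> a \<squnion> m" using mc join_right by auto
        moreover have "x \<in> carrier L" using x FC by blast
        ultimately show ?thesis using le_trans[of x m "a \<squnion> m"] mc by simp
      qed
    next
      fix y assume y: "y \<in> Upper L (insert a F)"
      hence yc: "y \<in> carrier L" unfolding Upper_def by blast
      have "y \<in> Upper L F" using y Upper_antimono[of F "insert a F"] by blast
      hence "m \<sqsubseteq> y" using m(2) by (simp add: least_def)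
      moreover have "a \<sqsubseteq> y" using y mc unfolding Upper_def by blast
      ultimately show "a \<squnion> m \<sqsubseteq> y" using join_le mc yc by auto
    next
      show "insert a F \<subseteq> carrier L" using FC mc by auto
      show "a \<squnion> m \<in> carrier L" using mc by auto
      show "a \<squnion> m \<in> C" using assms(5) aC m(1) by auto
    qed
  qed
  then obtain m where "m \<in> C" "least L m (Upper L F)" by auto
  moreover have "least L (\<Squnion> F) (Upper L F)"
    using assms finite_sup_least by auto
  ultimately show ?thesis using least_unique by metis
qed

lemma (in lattice) meet_closed_inf:
  assumes "finite F" "F \<noteq> {}" "F \<subseteq> C" "C \<subseteq> carrier L"
    "\<And>x y. x \<in> C \<Longrightarrow> y \<in> C \<Longrightarrow> x \<sqinter> y \<in> C"
  shows "\<Sqinter> F \<in> C"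
proof -
  have "\<exists>m\<in>C. greatest L m (Lower L F)"
    using assms(1,2,3)
  proof (induction F rule: finite_ne_induct)
    case (singleton x)
    thus ?case using assms(4) by (intro bexI[of _ x] inf_of_singletonI) auto
  next
    case (insert a F)
    then obtain m where m: "m \<in> C" "greatest L m (Lower L F)" by auto
    have aC: "a \<in> C" using insert by auto
    have mc: "m \<in> carrier L" "a \<in> carrier L" using m aC assms(4) by auto
    have FC: "F \<subseteq> carrier L" using insert assms(4) by auto
    show ?case
    proof (intro bexI[of _ "a \<sqinter> m"] greatest_LowerI[where L=L])
      fix x assume "x \<in> insert a F"
      then show "a \<sqinter> m \<sqsubseteq> x"
      proof
        assume "x = a" thus ?thesis using mc meet_left by auto
      next
        assume x: "x \<in> F"
        have xc: "x \<in> carrier L" using x FC by blast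
        have "m \<in> Lower L F" using m(2) by (simp add: greatest_def)
        hence "m \<sqsubseteq> x" using x xc unfolding Lower_def by blast
        moreover have "a \<sqinter> m \<sqsubseteq> m" using mc meet_right by auto
        ultimately show ?thesis using le_trans[of "a \<sqinter> m" m x] mc xc by simp
      qed
    next
      fix y assume y: "y \<in> Lower L (insert a F)"
      hence yc: "y \<in> carrier L" unfolding Lower_def by blast
      have "y \<in> Lower L F" using y Lower_antimono[of F "insert a F"] by blast
      hence "y \<sqsubseteq> m" using m(2) by (simp add: greatest_def)
      moreover have "y \<sqsubseteq> a" using y mc unfolding Lower_def by blast
      ultimately show "y \<sqsubseteq> a \<sqinter> m" using meet_le mc yc by auto
    next
      show "insert a F \<subseteq> carrier L" using FC mc by auto
      show "a \<sqinter> m \<in> carrier L" using mc by auto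
      show "a \<sqinter> m \<in> C" using assms(5) aC m(1) by auto
    qed
  qed
  then obtain m where "m \<in> C" "greatest L m (Lower L F)" by auto
  moreover have "greatest L (\<Sqinter> F) (Lower L F)"
    using assms finite_inf_greatest by auto
  ultimately show ?thesis using greatest_unique by metis
qed




locale sdp =
  fixes t :: nat and Ls :: "nat \<Rightarrow> 'a gorder" and L :: "(nat \<Rightarrow> 'a) set"
  assumes sd: "subdirect_product t Ls L" and finL: "finite L"
begin

abbreviation "P \<equiv> prod_ord t Ls L"

lemma lat: "i \<in> {1..t} \<Longrightarrow> lattice (Ls i)"
  using sd unfolding subdirect_product_def by auto
lemma subPi: "L \<subseteq> (\<Pi>\<^sub>E i\<in>{1..t}. carrier (Ls i))"
  using sd unfolding subdirect_product_def by auto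
lemma Lne: "L \<noteq> {}" using sd unfolding subdirect_product_def by auto
lemma J_in: "x \<in> L \<Longrightarrow> y \<in> L \<Longrightarrow>
   (\<lambda>i. if i \<in> {1..t} then x i \<squnion>\<^bsub>Ls i\<^esub> y i else undefined) \<in> L"
  using sd unfolding subdirect_product_def by auto
lemma M_in: "x \<in> L \<Longrightarrow> y \<in> L \<Longrightarrow>
   (\<lambda>i. if i \<in> {1..t} then x i \<sqinter>\<^bsub>Ls i\<^esub> y i else undefined) \<in> L"
  using sd unfolding subdirect_product_def by auto
lemma surj: "i \<in> {1..t} \<Longrightarrow> (\<lambda>x. x i) ` L = carrier (Ls i)"
  using sd unfolding subdirect_product_def by auto
lemma compc: "x \<in> L \<Longrightarrow> i \<in> {1..t} \<Longrightarrow> x i \<in> carrier (Ls i)"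
  using subPi by (auto simp: PiE_def Pi_def)
lemma compu: "x \<in> L \<Longrightarrow> i \<notin> {1..t} \<Longrightarrow> x i = undefined"
  using subPi PiE_arb by blast

lemma carP[simp]: "carrier P = L" by (simp add: prod_ord_def)
lemma eqP[simp]: "eq P = (=)" by (simp add: prod_ord_def)
lemma leP: "x \<sqsubseteq>\<^bsub>P\<^esub> y \<longleftrightarrow> (\<forall>i\<in>{1..t}. x i \<sqsubseteq>\<^bsub>Ls i\<^esub> y i)"
  by (simp add: prod_ord_def)

lemma poP: "partial_order P"
proof
  fix x assume "x \<in> carrier P"
  then show "x .=\<^bsub>P\<^esub> x" by simp
next
  fix x y assume "x .=\<^bsub>P\<^esub> y" then show "y .=\<^bsub>P\<^esub> x" by simp
next
  fix x y z assume "x .=\<^bsub>P\<^esub> y" "y .=\<^bsub>P\<^esub> z" then show "x .=\<^bsub>P\<^esub> z" by simp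
next
  fix x assume x: "x \<in> carrier P"
  show "x \<sqsubseteq>\<^bsub>P\<^esub> x" unfolding leP
  proof
    fix i assume i: "i \<in> {1..t}"
    interpret Li: lattice "Ls i" using lat[OF i] .
    show "x i \<sqsubseteq>\<^bsub>Ls i\<^esub> x i" using compc[of x i] x i by simp
  qed
next
  fix x y assume xy: "x \<sqsubseteq>\<^bsub>P\<^esub> y" "y \<sqsubseteq>\<^bsub>P\<^esub> x" and c: "x \<in> carrier P" "y \<in> carrier P"
  have "x = y"
  proof
    fix i show "x i = y i"
    proof (cases "i \<in> {1..t}")
      case True
      interpret Li: lattice "Ls i" using lat[OF True] .
      have "x i \<sqsubseteq>\<^bsub>Ls i\<^esub> y i" "y i \<sqsubseteq>\<^bsub>Ls i\<^esub> x i" using xy True by (simp_all add: leP)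
      moreover have "x i \<in> carrier (Ls i)" "y i \<in> carrier (Ls i)"
        using c True compc by auto
      ultimately show ?thesis by (rule Li.le_antisym)
    next
      case False thus ?thesis using c compu[of x i] compu[of y i] by simp
    qed
  qed
  thus "x .=\<^bsub>P\<^esub> y" by simp
next
  fix x y z assume xy: "x \<sqsubseteq>\<^bsub>P\<^esub> y" "y \<sqsubseteq>\<^bsub>P\<^esub> z" and c: "x \<in> carrier P" "y \<in> carrier P" "z \<in> carrier P"
  show "x \<sqsubseteq>\<^bsub>P\<^esub> z" unfolding leP
  proof
    fix i assume i: "i \<in> {1..t}"
    interpret Li: lattice "Ls i" using lat[OF i] .
    have "x i \<sqsubseteq>\<^bsub>Ls i\<^esub> y i" "y i \<sqsubseteq>\<^bsub>Ls i\<^esub> z i" using xy i by (simp_all add: leP)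
    moreover have "x i \<in> carrier (Ls i)" "y i \<in> carrier (Ls i)" "z i \<in> carrier (Ls i)"
      using c i compc by auto
    ultimately show "x i \<sqsubseteq>\<^bsub>Ls i\<^esub> z i" by (rule Li.le_trans)
  qed
next
  fix x y z w
  show "x .=\<^bsub>P\<^esub> y \<Longrightarrow> z .=\<^bsub>P\<^esub> w \<Longrightarrow> x \<sqsubseteq>\<^bsub>P\<^esub> z \<longleftrightarrow> y \<sqsubseteq>\<^bsub>P\<^esub> w" by simp
next
  show "(.=\<^bsub>P\<^esub>) = (=)" by simp
qed

lemma latP: "lattice P"
proof -
  interpret partial_order P by (rule poP)
  show ?thesis
  proof
    fix x y assume c: "x \<in> carrier P" "y \<in> carrier P"
    let ?j = "(\<lambda>i. if i \<in> {1..t} then x i \<squnion>\<^bsub>Ls i\<^esub> y i else undefined)"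
    show "\<exists>s. least P s (Upper P {x, y})"
    proof (intro exI least_UpperI[where L=P])
      fix z assume "z \<in> {x,y}"
      then show "z \<sqsubseteq>\<^bsub>P\<^esub> ?j" unfolding leP
      proof (intro ballI)
        fix i assume z: "z \<in> {x,y}" and i: "i \<in> {1..t}"
        interpret Li: lattice "Ls i" using lat[OF i] .
        show "z i \<sqsubseteq>\<^bsub>Ls i\<^esub> ?j i"
          using z i c compc[of x i] compc[of y i] Li.join_left Li.join_right by auto
      qed
    next
      fix u assume u: "u \<in> Upper P {x,y}"
      show "?j \<sqsubseteq>\<^bsub>P\<^esub> u" unfolding leP
      proof (intro ballI)
        fix i assume i: "i \<in> {1..t}"
        interpret Li: lattice "Ls i" using lat[OF i] .
        have uc: "u \<in> L" using u unfolding Upper_def by auto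
        have "x \<sqsubseteq>\<^bsub>P\<^esub> u" "y \<sqsubseteq>\<^bsub>P\<^esub> u" using u c unfolding Upper_def by auto
        hence "x i \<sqsubseteq>\<^bsub>Ls i\<^esub> u i" "y i \<sqsubseteq>\<^bsub>Ls i\<^esub> u i" using i leP by auto
        thus "?j i \<sqsubseteq>\<^bsub>Ls i\<^esub> u i"
          using i c uc compc[of x i] compc[of y i] compc[of u i] Li.join_le by auto
      qed
    qed (use c J_in in auto)
  next
    fix x y assume c: "x \<in> carrier P" "y \<in> carrier P"
    let ?j = "(\<lambda>i. if i \<in> {1..t} then x i \<sqinter>\<^bsub>Ls i\<^esub> y i else undefined)"
    show "\<exists>s. greatest P s (Lower P {x, y})"
    proof (intro exI greatest_LowerI[where L=P])
      fix z assume "z \<in> {x,y}"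
      then show "?j \<sqsubseteq>\<^bsub>P\<^esub> z" unfolding leP
      proof (intro ballI)
        fix i assume z: "z \<in> {x,y}" and i: "i \<in> {1..t}"
        interpret Li: lattice "Ls i" using lat[OF i] .
        show "?j i \<sqsubseteq>\<^bsub>Ls i\<^esub> z i"
          using z i c compc[of x i] compc[of y i] Li.meet_left Li.meet_right by auto
      qed
    next
      fix u assume u: "u \<in> Lower P {x,y}"
      show "u \<sqsubseteq>\<^bsub>P\<^esub> ?j" unfolding leP
      proof (intro ballI)
        fix i assume i: "i \<in> {1..t}"
        interpret Li: lattice "Ls i" using lat[OF i] .
        have uc: "u \<in> L" using u unfolding Lower_def by auto
        have "u \<sqsubseteq>\<^bsub>P\<^esub> x" "u \<sqsubseteq>\<^bsub>P\<^esub> y" using u c unfolding Lower_def by auto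
        hence "u i \<sqsubseteq>\<^bsub>Ls i\<^esub> x i" "u i \<sqsubseteq>\<^bsub>Ls i\<^esub> y i" using i leP by auto
        thus "u i \<sqsubseteq>\<^bsub>Ls i\<^esub> ?j i"
          using i c uc compc[of x i] compc[of y i] compc[of u i] Li.meet_le by auto
      qed
    qed (use c M_in in auto)
  qed
qed

end



context sdp begin

lemma joinP: "x \<in> L \<Longrightarrow> y \<in> L \<Longrightarrow>
   x \<squnion>\<^bsub>P\<^esub> y = (\<lambda>i. if i \<in> {1..t} then x i \<squnion>\<^bsub>Ls i\<^esub> y i else undefined)"
proof -
  assume c: "x \<in> L" "y \<in> L"
  interpret lattice P by (rule latP)
  let ?j = "(\<lambda>i. if i \<in> {1..t} then x i \<squnion>\<^bsub>Ls i\<^esub> y i else undefined)"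
  have jl: "?j \<in> L" using J_in c .
  have "x \<squnion>\<^bsub>P\<^esub> y \<in> L" using c join_closed by simp
  moreover have "?j \<sqsubseteq>\<^bsub>P\<^esub> x \<squnion>\<^bsub>P\<^esub> y" unfolding leP
  proof
    fix i assume i: "i \<in> {1..t}"
    interpret Li: lattice "Ls i" using lat[OF i] .
    have "x \<sqsubseteq>\<^bsub>P\<^esub> x \<squnion>\<^bsub>P\<^esub> y" "y \<sqsubseteq>\<^bsub>P\<^esub> x \<squnion>\<^bsub>P\<^esub> y" using c join_left join_right by auto
    hence "x i \<sqsubseteq>\<^bsub>Ls i\<^esub> (x \<squnion>\<^bsub>P\<^esub> y) i" "y i \<sqsubseteq>\<^bsub>Ls i\<^esub> (x \<squnion>\<^bsub>P\<^esub> y) i" using i leP by auto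
    thus "?j i \<sqsubseteq>\<^bsub>Ls i\<^esub> (x \<squnion>\<^bsub>P\<^esub> y) i"
      using i c compc[of x i] compc[of y i] compc[of "x \<squnion>\<^bsub>P\<^esub> y" i] join_closed Li.join_le by auto
  qed
  moreover have "x \<squnion>\<^bsub>P\<^esub> y \<sqsubseteq>\<^bsub>P\<^esub> ?j"
  proof (rule join_le)
    show "x \<sqsubseteq>\<^bsub>P\<^esub> ?j" unfolding leP
    proof
      fix i assume i: "i \<in> {1..t}"
      interpret Li: lattice "Ls i" using lat[OF i] .
      show "x i \<sqsubseteq>\<^bsub>Ls i\<^esub> ?j i" using i c compc[of x i] compc[of y i] Li.join_left by auto
    qed
    show "y \<sqsubseteq>\<^bsub>P\<^esub> ?j" unfolding leP
    proof
      fix i assume i: "i \<in> {1..t}"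
      interpret Li: lattice "Ls i" using lat[OF i] .
      show "y i \<sqsubseteq>\<^bsub>Ls i\<^esub> ?j i" using i c compc[of x i] compc[of y i] Li.join_right by auto
    qed
  qed (use c jl in auto)
  ultimately show ?thesis using jl le_antisym by auto
qed

lemma meetP: "x \<in> L \<Longrightarrow> y \<in> L \<Longrightarrow>
   x \<sqinter>\<^bsub>P\<^esub> y = (\<lambda>i. if i \<in> {1..t} then x i \<sqinter>\<^bsub>Ls i\<^esub> y i else undefined)"
proof -
  assume c: "x \<in> L" "y \<in> L"
  interpret lattice P by (rule latP)
  let ?j = "(\<lambda>i. if i \<in> {1..t} then x i \<sqinter>\<^bsub>Ls i\<^esub> y i else undefined)"
  have jl: "?j \<in> L" using M_in c .
  have "x \<sqinter>\<^bsub>P\<^esub> y \<in> L" using c meet_closed by simp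
  moreover have "x \<sqinter>\<^bsub>P\<^esub> y \<sqsubseteq>\<^bsub>P\<^esub> ?j" unfolding leP
  proof
    fix i assume i: "i \<in> {1..t}"
    interpret Li: lattice "Ls i" using lat[OF i] .
    have "x \<sqinter>\<^bsub>P\<^esub> y \<sqsubseteq>\<^bsub>P\<^esub> x" "x \<sqinter>\<^bsub>P\<^esub> y \<sqsubseteq>\<^bsub>P\<^esub> y" using c meet_left meet_right by auto
    hence "(x \<sqinter>\<^bsub>P\<^esub> y) i \<sqsubseteq>\<^bsub>Ls i\<^esub> x i" "(x \<sqinter>\<^bsub>P\<^esub> y) i \<sqsubseteq>\<^bsub>Ls i\<^esub> y i" using i leP by auto
    thus "(x \<sqinter>\<^bsub>P\<^esub> y) i \<sqsubseteq>\<^bsub>Ls i\<^esub> ?j i"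
      using i c compc[of x i] compc[of y i] compc[of "x \<sqinter>\<^bsub>P\<^esub> y" i] meet_closed Li.meet_le by auto
  qed
  moreover have "?j \<sqsubseteq>\<^bsub>P\<^esub> x \<sqinter>\<^bsub>P\<^esub> y"
  proof (rule meet_le)
    show "?j \<sqsubseteq>\<^bsub>P\<^esub> x" unfolding leP
    proof
      fix i assume i: "i \<in> {1..t}"
      interpret Li: lattice "Ls i" using lat[OF i] .
      show "?j i \<sqsubseteq>\<^bsub>Ls i\<^esub> x i" using i c compc[of x i] compc[of y i] Li.meet_left by auto
    qed
    show "?j \<sqsubseteq>\<^bsub>P\<^esub> y" unfolding leP
    proof
      fix i assume i: "i \<in> {1..t}"
      interpret Li: lattice "Ls i" using lat[OF i] .
      show "?j i \<sqsubseteq>\<^bsub>Ls i\<^esub> y i" using i c compc[of x i] compc[of y i] Li.meet_right by auto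
    qed
  qed (use c jl in auto)
  ultimately show ?thesis using jl le_antisym by auto
qed

end


context sdp begin
lemma carLs_ne: "i \<in> {1..t} \<Longrightarrow> carrier (Ls i) \<noteq> {}"
proof -
  assume i: "i \<in> {1..t}"
  from Lne obtain x where "x \<in> L" by blast
  thus ?thesis using compc[OF _ i] by blast
qed
lemma finLs: "i \<in> {1..t} \<Longrightarrow> finite (carrier (Ls i))"
proof -
  assume i: "i \<in> {1..t}"
  have "finite ((\<lambda>x. x i) ` L)" using finL by simp
  thus ?thesis using surj[OF i] by simp
qed

lemma botLs: "i \<in> {1..t} \<Longrightarrow> least (Ls i) (\<bottom>\<^bsub>Ls i\<^esub>) (carrier (Ls i))"
  using lattice.fin_bottom[OF lat finLs carLs_ne] by auto

lemma botP: "least P (\<bottom>\<^bsub>P\<^esub>) L"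
  using lattice.fin_bottom[OF latP] finL Lne by auto

lemma supP: "F \<subseteq> L \<Longrightarrow> least P (\<Squnion>\<^bsub>P\<^esub> F) (Upper P F)"
  using lattice.fin_sup[OF latP] finL Lne by auto

end


context sdp begin
lemma sigma_props:
  assumes i: "i \<in> {1..t}" and y: "y \<in> carrier (Ls i)"
  shows "sigma t Ls L i y \<in> L" "sigma t Ls L i y i = y"
    "\<And>x. x \<in> L \<Longrightarrow> sigma t Ls L i y \<sqsubseteq>\<^bsub>P\<^esub> x \<longleftrightarrow> y \<sqsubseteq>\<^bsub>Ls i\<^esub> x i"
proof -
  interpret Li: lattice "Ls i" using lat[OF i] .
  interpret lattice P by (rule latP)
  let ?S = "{x \<in> L. x i = y}"
  have "y \<in> (\<lambda>x. x i) ` L" using surj[OF i] y by simp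
  then obtain x0 where "x0 \<in> L" "y = x0 i" by blast
  hence Sne: "?S \<noteq> {}" by blast
  have Sfin: "finite ?S" using finL by auto
  have "y = y \<sqinter>\<^bsub>Ls i\<^esub> y" using Li.le_iff_join[of y y] y Li.le_refl[OF y] by blast
  hence yy: "y \<sqinter>\<^bsub>Ls i\<^esub> y = y" by (rule HOL.sym)
  have "\<Sqinter>\<^bsub>P\<^esub> ?S \<in> ?S"
  proof (rule meet_closed_inf[OF Sfin Sne])
    fix a b assume a: "a \<in> ?S" and b: "b \<in> ?S"
    have "(a \<sqinter>\<^bsub>P\<^esub> b) i = y" using meetP[of a b] a b i yy by simp
    moreover have "a \<sqinter>\<^bsub>P\<^esub> b \<in> L" using a b meet_closed by simp
    ultimately show "a \<sqinter>\<^bsub>P\<^esub> b \<in> ?S" by simp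
  qed auto
  thus sl: "sigma t Ls L i y \<in> L" and si: "sigma t Ls L i y i = y" unfolding sigma_def by auto
  have glb: "greatest P (\<Sqinter>\<^bsub>P\<^esub> ?S) (Lower P ?S)"
    by (rule finite_inf_greatest[OF Sfin _ Sne]) auto
  fix x assume x: "x \<in> L"
  show "sigma t Ls L i y \<sqsubseteq>\<^bsub>P\<^esub> x \<longleftrightarrow> y \<sqsubseteq>\<^bsub>Ls i\<^esub> x i"
  proof
    assume "sigma t Ls L i y \<sqsubseteq>\<^bsub>P\<^esub> x"
    hence "(sigma t Ls L i y) i \<sqsubseteq>\<^bsub>Ls i\<^esub> x i" using i unfolding leP by blast
    thus "y \<sqsubseteq>\<^bsub>Ls i\<^esub> x i" using si by simp
  next
    assume yx: "y \<sqsubseteq>\<^bsub>Ls i\<^esub> x i"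
    let ?z = "x \<sqinter>\<^bsub>P\<^esub> sigma t Ls L i y"
    have zl: "?z \<in> L" using meet_closed[of x "sigma t Ls L i y"] x sl by simp
    have "?z i = x i \<sqinter>\<^bsub>Ls i\<^esub> y" using meetP[OF x sl] i si by simp
    also have "\<dots> = y \<sqinter>\<^bsub>Ls i\<^esub> x i" by (rule meet_comm)
    also have "\<dots> = y"
    proof -
      have "y = y \<sqinter>\<^bsub>Ls i\<^esub> x i" using Li.le_iff_join[of y "x i"] yx y compc[OF x i] by blast
      thus ?thesis by (rule HOL.sym)
    qed
    finally have "?z \<in> ?S" using zl by simp
    moreover have "\<Sqinter>\<^bsub>P\<^esub> ?S \<in> Lower P ?S" using glb unfolding greatest_def by blast
    moreover have "?z \<in> carrier P" using zl by simp
    ultimately have "\<Sqinter>\<^bsub>P\<^esub> ?S \<sqsubseteq>\<^bsub>P\<^esub> ?z" unfolding Lower_def by blast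
    hence "sigma t Ls L i y \<sqsubseteq>\<^bsub>P\<^esub> ?z" unfolding sigma_def .
    moreover have "?z \<sqsubseteq>\<^bsub>P\<^esub> x" using meet_left[of x "sigma t Ls L i y"] x sl by simp
    ultimately show "sigma t Ls L i y \<sqsubseteq>\<^bsub>P\<^esub> x" using le_trans[of "sigma t Ls L i y" ?z x] zl x sl by simp
  qed
qed

end


context sdp begin

abbreviation "G \<equiv> scaffolding t Ls L"
abbreviation "eps \<equiv> epsilon t Ls L"
abbreviation "sg \<equiv> sigma t Ls L"

lemma G_mem: "a \<in> G \<longleftrightarrow> (\<exists>i\<in>{1..t}. \<exists>y\<in>carrier (Ls i) - {\<bottom>\<^bsub>Ls i\<^esub>}. a = sg i y)"
  unfolding scaffolding_def by blast

lemma G_sub: "G \<subseteq> L"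
proof
  fix a assume "a \<in> G"
  then obtain i y where "i \<in> {1..t}" "y \<in> carrier (Ls i)" "a = sg i y" unfolding G_mem by blast
  thus "a \<in> L" using sigma_props(1) by simp
qed

lemma eps_sub: "eps x \<subseteq> G" unfolding epsilon_def by blast

lemma eps_mem: "a \<in> eps x \<longleftrightarrow> a \<in> G \<and> a \<sqsubseteq>\<^bsub>P\<^esub> x" unfolding epsilon_def by blast

lemma bot_comp:
  assumes i: "i \<in> {1..t}" shows "(\<bottom>\<^bsub>P\<^esub>) i = \<bottom>\<^bsub>Ls i\<^esub>"
proof -
  interpret Li: lattice "Ls i" using lat[OF i] .
  have bl: "\<bottom>\<^bsub>Ls i\<^esub> \<in> carrier (Ls i)" using botLs[OF i] unfolding least_def by blast
  have bP: "\<bottom>\<^bsub>P\<^esub> \<in> L" using botP unfolding least_def by blast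
  have "\<bottom>\<^bsub>P\<^esub> \<sqsubseteq>\<^bsub>P\<^esub> sg i (\<bottom>\<^bsub>Ls i\<^esub>)"
    using botP sigma_props(1)[OF i bl] unfolding least_def by blast
  hence "\<bottom>\<^bsub>P\<^esub> i \<sqsubseteq>\<^bsub>Ls i\<^esub> sg i (\<bottom>\<^bsub>Ls i\<^esub>) i" using i unfolding leP by blast
  hence 1: "\<bottom>\<^bsub>P\<^esub> i \<sqsubseteq>\<^bsub>Ls i\<^esub> \<bottom>\<^bsub>Ls i\<^esub>" using sigma_props(2)[OF i bl] by simp
  have 2: "\<bottom>\<^bsub>Ls i\<^esub> \<sqsubseteq>\<^bsub>Ls i\<^esub> \<bottom>\<^bsub>P\<^esub> i" using botLs[OF i] compc[OF bP i] unfolding least_def by blast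
  show ?thesis using Li.le_antisym[OF 1 2 compc[OF bP i] bl] .
qed

lemma below_bot_comp:
  assumes i: "i \<in> {1..t}" and y: "y \<in> carrier (Ls i)" and "y \<sqsubseteq>\<^bsub>Ls i\<^esub> \<bottom>\<^bsub>Ls i\<^esub>"
  shows "y = \<bottom>\<^bsub>Ls i\<^esub>"
proof -
  interpret Li: lattice "Ls i" using lat[OF i] .
  have bl: "\<bottom>\<^bsub>Ls i\<^esub> \<in> carrier (Ls i)" using botLs[OF i] unfolding least_def by blast
  have "\<bottom>\<^bsub>Ls i\<^esub> \<sqsubseteq>\<^bsub>Ls i\<^esub> y" using botLs[OF i] y unfolding least_def by blast
  thus ?thesis using Li.le_antisym assms bl by blast
qed

lemma eps_bot: "eps (\<bottom>\<^bsub>P\<^esub>) = {}"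
proof (rule ccontr)
  assume "eps (\<bottom>\<^bsub>P\<^esub>) \<noteq> {}"
  then obtain a where a: "a \<in> G" "a \<sqsubseteq>\<^bsub>P\<^esub> \<bottom>\<^bsub>P\<^esub>" unfolding epsilon_def by blast
  then obtain i y where i: "i \<in> {1..t}" and y: "y \<in> carrier (Ls i)" "y \<noteq> \<bottom>\<^bsub>Ls i\<^esub>" and ay: "a = sg i y"
    unfolding G_mem by blast
  have bP: "\<bottom>\<^bsub>P\<^esub> \<in> L" using botP unfolding least_def by blast
  have "y \<sqsubseteq>\<^bsub>Ls i\<^esub> (\<bottom>\<^bsub>P\<^esub>) i" using sigma_props(3)[OF i y(1) bP] a(2) ay by simp
  hence "y \<sqsubseteq>\<^bsub>Ls i\<^esub> \<bottom>\<^bsub>Ls i\<^esub>" using bot_comp[OF i] by simp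
  thus False using below_bot_comp[OF i y(1)] y(2) by blast
qed

lemma eps_lub: assumes x: "x \<in> L" shows "least P x (Upper P (eps x))"
proof (rule least_UpperI[where L=P])
  fix a assume "a \<in> eps x" thus "a \<sqsubseteq>\<^bsub>P\<^esub> x" unfolding epsilon_def by blast
next
  fix u assume u: "u \<in> Upper P (eps x)"
  have uL: "u \<in> L" using u unfolding Upper_def by simp
  show "x \<sqsubseteq>\<^bsub>P\<^esub> u" unfolding leP
  proof
    fix i assume i: "i \<in> {1..t}"
    have xi: "x i \<in> carrier (Ls i)" using compc[OF x i] .
    show "x i \<sqsubseteq>\<^bsub>Ls i\<^esub> u i"
    proof (cases "x i = \<bottom>\<^bsub>Ls i\<^esub>")
      case True thus ?thesis using botLs[OF i] compc[OF uL i] unfolding least_def by simp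
    next
      case False
      interpret Li: lattice "Ls i" using lat[OF i] .
      have g: "sg i (x i) \<in> G" unfolding G_mem using i xi False by blast
      have sL: "sg i (x i) \<in> L" using sigma_props(1)[OF i xi] .
      have "sg i (x i) \<sqsubseteq>\<^bsub>P\<^esub> x" using sigma_props(3)[OF i xi x] Li.le_refl[OF xi] by simp
      hence "sg i (x i) \<in> eps x \<inter> carrier P" using g sL unfolding epsilon_def by simp
      hence "sg i (x i) \<sqsubseteq>\<^bsub>P\<^esub> u" using u unfolding Upper_def by blast
      thus ?thesis using sigma_props(3)[OF i xi uL] by simp
    qed
  qed
next
  show "eps x \<subseteq> carrier P" using eps_sub[of x] G_sub by simp
  show "x \<in> carrier P" using x by simp
qed

end


context sdp begin

lemma eps_le: assumes x: "x \<in> L" and y: "y \<in> L"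
  shows "x \<sqsubseteq>\<^bsub>P\<^esub> y \<longleftrightarrow> eps x \<subseteq> eps y"
proof
  interpret lattice P by (rule latP)
  assume xy: "x \<sqsubseteq>\<^bsub>P\<^esub> y"
  show "eps x \<subseteq> eps y"
  proof
    fix a assume "a \<in> eps x"
    hence a: "a \<in> G" "a \<sqsubseteq>\<^bsub>P\<^esub> x" unfolding eps_mem by auto
    have "a \<in> L" using a G_sub by blast
    hence "a \<sqsubseteq>\<^bsub>P\<^esub> y" using le_trans[of a x y] a(2) xy x y by simp
    thus "a \<in> eps y" using a unfolding eps_mem by simp
  qed
next
  assume sub: "eps x \<subseteq> eps y"
  have "y \<in> Upper P (eps x)" using sub y by (auto simp: Upper_def eps_mem)
  thus "x \<sqsubseteq>\<^bsub>P\<^esub> y" using least_le[OF eps_lub[OF x]] by blast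
qed

lemma eps_ideal: assumes x: "x \<in> L" shows "vee_ideal t Ls L (eps x)"
  unfolding vee_ideal_def
proof (intro conjI allI ballI impI)
  interpret lattice P by (rule latP)
  show "eps x \<subseteq> G" by (rule eps_sub)
  fix a b assume a: "a \<in> eps x" and b: "b \<in> G" and ba: "b \<sqsubseteq>\<^bsub>P\<^esub> a"
  have "a \<in> L" "b \<in> L" using a b G_sub eps_sub by blast+
  hence "b \<sqsubseteq>\<^bsub>P\<^esub> x" using le_trans[of b a x] ba a x unfolding eps_mem by simp
  thus "b \<in> eps x" using b unfolding eps_mem by simp
next
  fix B assume B: "B \<subseteq> eps x" and g: "\<Squnion>\<^bsub>P\<^esub> B \<in> G"
  have BL: "B \<subseteq> L" using B eps_sub G_sub by blast
  have "x \<in> Upper P B" using B x by (auto simp: Upper_def eps_mem)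
  hence "\<Squnion>\<^bsub>P\<^esub> B \<sqsubseteq>\<^bsub>P\<^esub> x" using least_le[OF supP[OF BL]] by blast
  thus "\<Squnion>\<^bsub>P\<^esub> B \<in> eps x" using g unfolding eps_mem by simp
qed

end


context sdp begin
lemma eps_onto: assumes A: "vee_ideal t Ls L A" shows "eps (\<Squnion>\<^bsub>P\<^esub> A) = A"
proof -
  interpret lattice P by (rule latP)
  have AG: "A \<subseteq> G" using A unfolding vee_ideal_def by blast
  have her: "\<And>a b. a \<in> A \<Longrightarrow> b \<in> G \<Longrightarrow> b \<sqsubseteq>\<^bsub>P\<^esub> a \<Longrightarrow> b \<in> A"
    using A unfolding vee_ideal_def by blast
  have clos: "\<And>B. B \<subseteq> A \<Longrightarrow> \<Squnion>\<^bsub>P\<^esub> B \<in> G \<Longrightarrow> \<Squnion>\<^bsub>P\<^esub> B \<in> A"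
    using A unfolding vee_ideal_def by blast
  have AL: "A \<subseteq> L" using AG G_sub by blast
  define s where "s = \<Squnion>\<^bsub>P\<^esub> A"
  have ls: "least P s (Upper P A)" unfolding s_def using supP[OF AL] .
  have sL: "s \<in> L" using least_closed[OF ls] by simp
  have up: "\<And>b. b \<in> A \<Longrightarrow> b \<sqsubseteq>\<^bsub>P\<^esub> s" using least_Upper_above[OF ls] AL by simp
  show ?thesis unfolding s_def[symmetric]
  proof
    show "A \<subseteq> eps s" using AG up by (auto simp: eps_mem)
  next
    show "eps s \<subseteq> A"
    proof
      fix a assume "a \<in> eps s"
      hence aG: "a \<in> G" and as: "a \<sqsubseteq>\<^bsub>P\<^esub> s" unfolding eps_mem by auto
      show "a \<in> A"
      proof (cases "A = {}")
        case True
        have "least P s L" using ls True by simp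
        hence sb: "s = \<bottom>\<^bsub>P\<^esub>" using least_unique[OF _ botP] by simp
        have "a \<in> eps s" using aG as eps_mem by simp
        hence False using sb eps_bot by simp
        thus ?thesis ..
      next
        case Ane: False
        obtain i y where i: "i \<in> {1..t}" and y: "y \<in> carrier (Ls i)" "y \<noteq> \<bottom>\<^bsub>Ls i\<^esub>" and ay: "a = sg i y"
          using aG unfolding G_mem by blast
        interpret Li: lattice "Ls i" using lat[OF i] .
        have ys: "y \<sqsubseteq>\<^bsub>Ls i\<^esub> s i" using sigma_props(3)[OF i y(1) sL] as ay by simp
        have si: "s i \<in> carrier (Ls i)" using compc[OF sL i] .
        have si_nb: "s i \<noteq> \<bottom>\<^bsub>Ls i\<^esub>" using below_bot_comp[OF i y(1)] ys y(2) by auto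
        define B where "B = (\<lambda>b. sg i (b i)) ` {b \<in> A. b i \<noteq> \<bottom>\<^bsub>Ls i\<^esub>}"
        have BA: "B \<subseteq> A"
        proof
          fix z assume "z \<in> B"
          then obtain b where b: "b \<in> A" "b i \<noteq> \<bottom>\<^bsub>Ls i\<^esub>" and z: "z = sg i (b i)"
            unfolding B_def by blast
          have bL: "b \<in> L" using b AL by blast
          have bi: "b i \<in> carrier (Ls i)" using compc[OF bL i] .
          have zG: "z \<in> G" unfolding G_mem using i bi b(2) z by blast
          have "z \<sqsubseteq>\<^bsub>P\<^esub> b" using sigma_props(3)[OF i bi bL] Li.le_refl[OF bi] z by simp
          thus "z \<in> A" using her[OF b(1) zG] by simp
        qed
        have BL: "B \<subseteq> L" using BA AL by blast
        define c where "c = sg i (s i)"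
        have cL: "c \<in> L" unfolding c_def using sigma_props(1)[OF i si] .
        have ci: "c i = s i" unfolding c_def using sigma_props(2)[OF i si] .
        have cG: "c \<in> G" unfolding G_mem c_def using i si si_nb by blast
        define d where "d = \<Squnion>\<^bsub>P\<^esub> B"
        have ld: "least P d (Upper P B)" unfolding d_def using supP[OF BL] .
        have dL: "d \<in> L" using least_closed[OF ld] by simp
        have "c \<in> Upper P B"
          unfolding Upper_def
        proof (intro IntI CollectI allI impI)
          fix z assume "z \<in> B \<inter> carrier P"
          then obtain b where b: "b \<in> A" and z: "z = sg i (b i)"
            unfolding B_def by blast
          have bL: "b \<in> L" using b AL by blast
          have bi: "b i \<in> carrier (Ls i)" using compc[OF bL i] .
          have "b i \<sqsubseteq>\<^bsub>Ls i\<^esub> s i" using up[OF b] i unfolding leP by blast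
          thus "z \<sqsubseteq>\<^bsub>P\<^esub> c" using sigma_props(3)[OF i bi cL] ci z by simp
        qed (use cL in simp)
        hence dc: "d \<sqsubseteq>\<^bsub>P\<^esub> c" using least_le[OF ld] by blast
        define C where "C = {x \<in> L. x i \<sqsubseteq>\<^bsub>Ls i\<^esub> d i}"
        have di: "d i \<in> carrier (Ls i)" using compc[OF dL i] .
        have AC: "A \<subseteq> C"
        proof
          fix b assume b: "b \<in> A"
          have bL: "b \<in> L" using b AL by blast
          have bi: "b i \<in> carrier (Ls i)" using compc[OF bL i] .
          show "b \<in> C"
          proof (cases "b i = \<bottom>\<^bsub>Ls i\<^esub>")
            case True
            thus ?thesis using botLs[OF i] di bL unfolding least_def C_def by simp
          next
            case False
            hence "sg i (b i) \<in> B" unfolding B_def using b by blast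
            hence "sg i (b i) \<sqsubseteq>\<^bsub>P\<^esub> d" using least_Upper_above[OF ld] BL by simp
            thus ?thesis using sigma_props(3)[OF i bi dL] bL unfolding C_def by simp
          qed
        qed
        have "\<Squnion>\<^bsub>P\<^esub> A \<in> C"
        proof (rule join_closed_sup[OF _ Ane AC])
          show "finite A" using AL finL finite_subset by blast
          show "C \<subseteq> carrier P" unfolding C_def by auto
          fix x z assume x: "x \<in> C" and z: "z \<in> C"
          have xL: "x \<in> L" and zL: "z \<in> L" using x z unfolding C_def by auto
          have "(x \<squnion>\<^bsub>P\<^esub> z) i = x i \<squnion>\<^bsub>Ls i\<^esub> z i" using joinP[OF xL zL] i by simp
          also have "\<dots> \<sqsubseteq>\<^bsub>Ls i\<^esub> d i"
            using Li.join_le[of "x i" "d i" "z i"] x z compc[OF xL i] compc[OF zL i] di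
            unfolding C_def by simp
          finally have "(x \<squnion>\<^bsub>P\<^esub> z) i \<sqsubseteq>\<^bsub>Ls i\<^esub> d i" .
          moreover have "x \<squnion>\<^bsub>P\<^esub> z \<in> L" using join_closed[of x z] xL zL by simp
          ultimately show "x \<squnion>\<^bsub>P\<^esub> z \<in> C" unfolding C_def by simp
        qed
        hence "s i \<sqsubseteq>\<^bsub>Ls i\<^esub> d i" unfolding s_def C_def by simp
        hence cd: "c \<sqsubseteq>\<^bsub>P\<^esub> d" using sigma_props(3)[OF i si dL] unfolding c_def by simp
        have "d = c" using le_antisym[OF dc cd] dL cL by simp
        hence cA: "c \<in> A" using clos[OF BA] cG unfolding d_def by simp
        have "a \<sqsubseteq>\<^bsub>P\<^esub> c" using sigma_props(3)[OF i y(1) cL] ys ci ay by simp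
        thus ?thesis using her[OF cA aG] by simp
      qed
    qed
  qed
qed

end



theorem mainTheorem5:
  fixes t :: nat and Ls :: "nat \<Rightarrow> 'a gorder" and L :: "(nat \<Rightarrow> 'a) set"
  assumes "subdirect_product t Ls L"
    and "finite L"
    and "\<forall>i\<in>{1..t}. finite (carrier (Ls i)) \<and> subdirectly_irreducible (Ls i)"
  shows "bij_betw (epsilon t Ls L) L {A. vee_ideal t Ls L A}
    \<and> (\<forall>x\<in>L. \<forall>y\<in>L. x \<sqsubseteq>\<^bsub>prod_ord t Ls L\<^esub> y \<longleftrightarrow> epsilon t Ls L x \<subseteq> epsilon t Ls L y)
    \<and> bij_betw (epsilon t Ls L) (L - {\<bottom>\<^bsub>prod_ord t Ls L\<^esub>}) {A. vee_ideal t Ls L A \<and> A \<noteq> {}}"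
proof -
  interpret sdp t Ls L using assms(1,2) by unfold_locales
  interpret po: partial_order P by (rule poP)
  have bij1: "bij_betw eps L {A. vee_ideal t Ls L A}"
  proof (rule bij_betw_imageI)
    show "inj_on eps L"
    proof (rule inj_onI)
      fix x y assume x: "x \<in> L" and y: "y \<in> L" and e: "eps x = eps y"
      have "x \<sqsubseteq>\<^bsub>P\<^esub> y" "y \<sqsubseteq>\<^bsub>P\<^esub> x" using eps_le[OF x y] eps_le[OF y x] e by auto
      thus "x = y" using po.le_antisym x y by simp
    qed
    show "eps ` L = {A. vee_ideal t Ls L A}"
    proof
      show "eps ` L \<subseteq> {A. vee_ideal t Ls L A}" using eps_ideal by blast
      show "{A. vee_ideal t Ls L A} \<subseteq> eps ` L"
      proof
        fix A assume "A \<in> {A. vee_ideal t Ls L A}"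
        hence A: "vee_ideal t Ls L A" by simp
        have AL: "A \<subseteq> L" using A G_sub unfolding vee_ideal_def by blast
        have "\<Squnion>\<^bsub>P\<^esub> A \<in> L" using least_closed[OF supP[OF AL]] by simp
        moreover have "eps (\<Squnion>\<^bsub>P\<^esub> A) = A" using eps_onto[OF A] .
        ultimately show "A \<in> eps ` L" by (metis imageI)
      qed
    qed
  qed
  have bL: "\<bottom>\<^bsub>P\<^esub> \<in> L" using botP unfolding least_def by blast
  have b2: "bij_betw eps {\<bottom>\<^bsub>P\<^esub>} {{}}" unfolding bij_betw_def using eps_bot by simp
  have "bij_betw eps (L - {\<bottom>\<^bsub>P\<^esub>}) ({A. vee_ideal t Ls L A} - {{}})"
    by (rule bij_betw_DiffI[OF bij1 b2]) (use bL eps_bot eps_ideal[OF bL] in auto)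
  moreover have "{A. vee_ideal t Ls L A} - {{}} = {A. vee_ideal t Ls L A \<and> A \<noteq> {}}" by blast
  ultimately show ?thesis using bij1 eps_le by auto
qed



end
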